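(* Let $p\ge 1$. (1) For $n\ge1$ and $x_1,\dots,x_n\in\mathbb{R}$, the map $t\mapsto s_p^p(x_1,\dots,x_n,t)$ is convex, decreasing on $\mathbb{R}_-$ and increasing on $\mathbb{R}_+$. (2) For $n\ge 1$ and $x_1,\dots,x_{n+1}\in\mathbb{R}$, $s_p^p(x_1,\dots,x_{n+1})-s_p^p(x_1,\dots,x_n)\ge|x_{n+1}|^p$ in all cases, and $\ge p|x_n|^{p-1}|x_{n+1}|$ if $x_{n+1}$ and $x_n$ have the same sign. (3) Symmetrically, the map $t\mapsto s_p^p(t,x_1,\dots,x_n)$ is convex, decreasing on $\mathbb{R}_-$ and increasing on $\mathbb{R}_+$, and for $x_0,x_1,\dots,x_n\in\mathbb{R}$, $s_p^p(x_0,x_1,\dots,x_n)-s_p^p(x_1,\dots,x_n)\ge|x_0|^p$ in all cases and $\ge p|x_1|^{p-1}|x_0|$ if $x_0$ and $x_1$ have the same sign.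
   Context: For a finite real sequence $x=(x_1,\dots,x_n)$, the maximal $p$-sum is $s_p(x)=\big(\sup_{k\le n}\sup_{0=i_0<\dots<i_k=n}\sum_{j=0}^{k-1}\big|\sum_{\ell=i_j+1}^{i_{j+1}}x_\ell\big|^p\big)^{1/p}$. *)

theory Defs
  imports "HOL-Analysis.Analysis"
begin

text \<open>Admissible cut-point lists 0 = i_0 < i_1 < ... < i_k = n (k ranges over all values
  allowed by strict monotonicity, so k \<le> n automatically).\<close>
definition cuts :: "nat \<Rightarrow> nat list set" where
  "cuts n = {is. is \<noteq> [] \<and> sorted_wrt (<) is \<and> hd is = 0 \<and> last is = n}"

text \<open>The sum of |block sums|^p for a given cut list; the list xs is 0-indexed,
  so the block (i_j, i_{j+1}] of the paper is {i_j ..< i_{j+1}} here.\<close>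
definition block_psum :: "real \<Rightarrow> real list \<Rightarrow> nat list \<Rightarrow> real" where
  "block_psum p xs is =
     (\<Sum>j<length is - 1. \<bar>\<Sum>l\<in>{is ! j ..< is ! (j+1)}. xs ! l\<bar> powr p)"

definition sp :: "real \<Rightarrow> real list \<Rightarrow> real" where
  "sp p xs = (SUP is\<in>cuts (length xs). block_psum p xs is) powr (1 / p)"

end

theory Submission
  imports Defs
begin

definition bval :: "real \<Rightarrow> real list list \<Rightarrow> real" where
  "bval p bs = sum_list (map (\<lambda>b. \<bar>sum_list b\<bar> powr p) bs)"

definition parts :: "real list \<Rightarrow> real list list set" where
  "parts xs = {bs. concat bs = xs \<and> [] \<notin> set bs}"

fun blk :: "nat list \<Rightarrow> 'a list \<Rightarrow> 'a list list" where
  "blk (i # j # is) xs = take (j - i) (drop i xs) # blk (j # is) xs"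
| "blk _ xs = []"

fun cof :: "nat \<Rightarrow> 'a list list \<Rightarrow> nat list" where
  "cof a [] = [a]"
| "cof a (b # bs) = a # cof (a + length b) bs"

lemma sum_take_drop:
  assumes "i \<le> j" "j \<le> length xs"
  shows "sum_list (take (j - i) (drop i xs)) = (\<Sum>l\<in>{i..<j}. (xs::real list) ! l)"
proof -
  have "sum_list (take (j - i) (drop i xs)) = (\<Sum>k = 0..<j-i. take (j - i) (drop i xs) ! k)"
    using assms by (simp add: sum_list_sum_nth)
  also have "\<dots> = (\<Sum>k = 0..<j-i. xs ! (i + k))"
    using assms by (intro sum.cong) auto
  also have "\<dots> = (\<Sum>l\<in>{i..<j}. xs ! l)"
    using assms sum.shift_bounds_nat_ivl[of "\<lambda>l. xs ! l" 0 i "j - i"] by (simp add: add.commute)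
  finally show ?thesis .
qed

lemma blk_props:
  "sorted_wrt (<) is \<Longrightarrow> is \<noteq> [] \<Longrightarrow> last is \<le> length (xs::real list) \<Longrightarrow>
   concat (blk is xs) = take (last is - hd is) (drop (hd is) xs) \<and> [] \<notin> set (blk is xs) \<and>
   bval p (blk is xs) = (\<Sum>j<length is - 1. \<bar>\<Sum>l\<in>{is!j..<is!(j+1)}. xs!l\<bar> powr p)"
proof (induction "is" xs rule: blk.induct)
  case (1 i j "is" xs)
  have ij: "i < j" using 1(2) by simp
  have jl: "j \<le> last (j # is)"
  proof -
    have "last (j#is) \<in> set (j#is)" by (rule last_in_set) simp
    then show ?thesis using 1(2) by (cases "last (j#is) = j") auto
  qed
  have l: "last (j # is) \<le> length xs" using 1(4) by simp
  have IH: "concat (blk (j # is) xs) = take (last (j # is) - j) (drop j xs) \<and> [] \<notin> set (blk (j # is) xs) \<and>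
   bval p (blk (j # is) xs) = (\<Sum>k<length (j # is) - 1. \<bar>\<Sum>l\<in>{(j#is)!k..<(j#is)!(k+1)}. xs!l\<bar> powr p)"
  proof -
    have "sorted_wrt (<) (j#is)" using 1(2) by simp
    from "1.IH"[OF this _ l] show ?thesis by (simp only: list.sel list.distinct not_False_eq_True simp_thms)
  qed
  have c: "take (j - i) (drop i xs) @ take (last (j # is) - j) (drop j xs) = take (last (j # is) - i) (drop i xs)"
  proof -
    define L where "L = last (j # is)"
    have e: "L - i = (j - i) + (L - j)" using ij jl unfolding L_def by linarith
    have d: "drop (j - i) (drop i xs) = drop j xs" using ij by simp
    have "take (L - i) (drop i xs) = take (j - i) (drop i xs) @ take (L - j) (drop (j - i) (drop i xs))"
      unfolding e by (rule take_add)
    then show ?thesis unfolding L_def[symmetric] d by simp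
  qed
  have jx: "j \<le> length xs" using jl l by linarith
  have ne: "take (j - i) (drop i xs) \<noteq> []" using ij jx by simp
  have s: "sum_list (take (j - i) (drop i xs)) = (\<Sum>l\<in>{i..<j}. xs ! l)"
    using ij jl l by (intro sum_take_drop) auto
  have "(\<Sum>k<length (i # j # is) - 1. \<bar>\<Sum>l\<in>{(i#j#is)!k..<(i#j#is)!(k+1)}. xs!l\<bar> powr p)
      = \<bar>\<Sum>l\<in>{i..<j}. xs!l\<bar> powr p + (\<Sum>k<length (j # is) - 1. \<bar>\<Sum>l\<in>{(j#is)!k..<(j#is)!(k+1)}. xs!l\<bar> powr p)"
    by (simp del: sum.lessThan_Suc add: sum.lessThan_Suc_shift)
  moreover have "bval p (blk (i # j # is) xs) = \<bar>\<Sum>l\<in>{i..<j}. xs!l\<bar> powr p + bval p (blk (j # is) xs)"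
    using s by (simp add: bval_def)
  ultimately show ?case using IH c ne by simp
next
  case ("2_1" xs) then show ?case by (simp add: bval_def)
next
  case ("2_2" v xs) show ?case by (simp add: bval_def)
qed 

lemma cof_ge: "x \<in> set (cof a bs) \<Longrightarrow> a \<le> x"
  by (induction a bs rule: cof.induct) fastforce+

lemma cof_props:
  "[] \<notin> set bs \<Longrightarrow> sorted_wrt (<) (cof a bs) \<and> hd (cof a bs) = a \<and> cof a bs \<noteq> [] \<and>
     last (cof a bs) = a + length (concat bs)"
proof (induction a bs rule: cof.induct)
  case (2 a b bs)
  then show ?case using cof_ge[of _ "a + length b" bs] by (cases bs) fastforce+
qed auto

lemma blk_cof:
  "[] \<notin> set bs \<Longrightarrow> length ys = a \<Longrightarrow> blk (cof a bs) (ys @ concat bs @ zs) = bs"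
proof (induction bs arbitrary: a ys)
  case (Cons b bs)
  have IH: "blk (cof (a + length b) bs) ((ys @ b) @ concat bs @ zs) = bs"
    using Cons by (intro Cons.IH) auto
  show ?case
  proof (cases bs)
    case Nil then show ?thesis using Cons by simp
  next
    case (Cons b' bs')
    then show ?thesis using IH Cons.prems by simp
  qed
qed simp

lemma image_eq: "block_psum p xs ` cuts (length xs) = bval p ` parts xs"
proof
  show "block_psum p xs ` cuts (length xs) \<subseteq> bval p ` parts xs"
  proof
    fix v assume "v \<in> block_psum p xs ` cuts (length xs)"
    then obtain "is" where isc: "is \<in> cuts (length xs)" "v = block_psum p xs is" by auto
    then have "sorted_wrt (<) is" "is \<noteq> []" "last is = length xs" "hd is = 0" by (auto simp: cuts_def)
    from blk_props[OF this(1,2), of xs p] this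
    have "blk is xs \<in> parts xs" "bval p (blk is xs) = v" using isc by (auto simp: parts_def block_psum_def)
    then show "v \<in> bval p ` parts xs" by force
  qed
next
  show "bval p ` parts xs \<subseteq> block_psum p xs ` cuts (length xs)"
  proof
    fix v assume "v \<in> bval p ` parts xs"
    then obtain bs where bs: "concat bs = xs" "[] \<notin> set bs" "v = bval p bs" by (auto simp: parts_def)
    have c: "cof 0 bs \<in> cuts (length xs)" using cof_props[OF bs(2), of 0] bs by (auto simp: cuts_def)
    have "blk (cof 0 bs) xs = bs" using blk_cof[OF bs(2), of "[]" 0 "[]"] bs by simp
    moreover have "bval p (blk (cof 0 bs) xs) = block_psum p xs (cof 0 bs)"
      using blk_props[of "cof 0 bs" xs p] cof_props[OF bs(2), of 0] bs by (simp add: block_psum_def)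
    ultimately show "v \<in> block_psum p xs ` cuts (length xs)" using c bs by force
  qed
qed

lemma parts_finite: "finite (parts xs)"
proof -
  have "parts xs \<subseteq> {bs. set bs \<subseteq> {b. set b \<subseteq> set xs \<and> length b \<le> length xs} \<and> length bs \<le> length xs}"
  proof
    fix bs assume "bs \<in> parts xs"
    then have a: "concat bs = xs" "[] \<notin> set bs" by (auto simp: parts_def)
    have "length bs \<le> length (concat bs)" using a(2)
    proof (induction bs)
      case (Cons a bs)
      then have "length a \<ge> 1" by (cases a) auto
      then show ?case using Cons by simp
    qed simp
    moreover have "\<forall>b\<in>set bs. set b \<subseteq> set xs \<and> length b \<le> length xs"
    proof
      fix b assume b: "b \<in> set bs"
      have "length b \<le> sum_list (map length bs)"
        by (rule member_le_sum_list) (use b in auto)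
      then show "set b \<subseteq> set xs \<and> length b \<le> length xs" using a(1) b by (auto simp: length_concat)
    qed
    ultimately show "bs \<in> {bs. set bs \<subseteq> {b. set b \<subseteq> set xs \<and> length b \<le> length xs} \<and> length bs \<le> length xs}"
      using a by auto
  qed
  moreover have "finite {bs. set bs \<subseteq> {b. set b \<subseteq> set xs \<and> length b \<le> length xs} \<and> length bs \<le> length xs}"
    by (intro finite_lists_length_le finite_lists_length_le) auto
  ultimately show ?thesis by (rule finite_subset)
qed


definition M :: "real \<Rightarrow> real list \<Rightarrow> real" where
  "M p xs = Max (bval p ` parts xs)"

lemma parts_ne: "parts xs \<noteq> {}"
proof (cases "xs = []")
  case True then have "[] \<in> parts xs" by (simp add: parts_def)
  then show ?thesis by blast
next
  case False then have "[xs] \<in> parts xs" by (simp add: parts_def)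
  then show ?thesis by blast
qed

lemma bval_nonneg: "0 \<le> bval p bs"
  unfolding bval_def by (induction bs) auto

lemma bval_append [simp]: "bval p (bs @ cs) = bval p bs + bval p cs"
  by (simp add: bval_def)

lemma bval_Cons [simp]: "bval p (b # cs) = \<bar>sum_list b\<bar> powr p + bval p cs"
  by (simp add: bval_def)

lemma bval_Nil [simp]: "bval p [] = 0"
  by (simp add: bval_def)

lemma M_ge: "bs \<in> parts xs \<Longrightarrow> bval p bs \<le> M p xs"
  unfolding M_def using parts_finite by (intro Max_ge) auto

lemma M_obtain: "\<exists>bs\<in>parts xs. M p xs = bval p bs"
proof -
  have "M p xs \<in> bval p ` parts xs" unfolding M_def using parts_finite parts_ne by (intro Max_in) auto
  then show ?thesis by auto
qed

lemma M_nonneg: "0 \<le> M p xs"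
  using M_obtain[of xs p] bval_nonneg by metis

lemma sp_eq: "p > 0 \<Longrightarrow> sp p xs powr p = M p xs"
proof -
  assume p: "p > 0"
  have "(SUP is\<in>cuts (length xs). block_psum p xs is) = Sup (bval p ` parts xs)"
    by (simp add: image_eq)
  also have "\<dots> = M p xs" unfolding M_def using parts_finite parts_ne by (intro cSup_eq_Max) auto
  finally have "sp p xs = M p xs powr (1 / p)" by (simp add: sp_def)
  then have "sp p xs powr p = M p xs powr 1" using p by (simp add: powr_powr)
  then show ?thesis using M_nonneg powr_one by metis
qed

lemma M_rev_le: "M p xs \<le> M p (rev xs)"
proof -
  obtain bs where bs: "bs \<in> parts xs" "M p xs = bval p bs" using M_obtain by blast
  have "rev (map rev bs) \<in> parts (rev xs)" using bs(1) by (auto simp: parts_def rev_concat rev_map)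
  moreover have "bval p (rev (map rev bs)) = bval p bs"
    by (simp add: bval_def rev_map[symmetric] o_def sum_list.rev)
  ultimately show ?thesis using bs M_ge by metis
qed

lemma M_rev: "M p (rev xs) = M p xs"
  using M_rev_le[of p xs] M_rev_le[of p "rev xs"] by simp

lemma powr_conv:
  fixes a b u p :: real
  assumes "p \<ge> 1" "0 \<le> a" "0 \<le> b" "0 \<le> u" "u \<le> 1"
  shows "((1 - u) * a + u * b) powr p \<le> (1 - u) * a powr p + u * b powr p"
proof -
  have up: "\<And>v::real. 0 \<le> v \<Longrightarrow> v \<le> 1 \<Longrightarrow> v powr p \<le> v"
  proof -
    fix v :: real assume "0 \<le> v" "v \<le> 1"
    then show "v powr p \<le> v" using powr_le_one_le[of v p] assms(1) by (cases "v = 0") auto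
  qed
  show ?thesis
  proof (cases "a = 0")
    case True
    have "(u * b) powr p = u powr p * b powr p" by (rule powr_mult)
    also have "\<dots> \<le> u * b powr p" using up[of u] assms by (intro mult_right_mono) auto
    finally show ?thesis using True assms(1) by simp
  next
    case a: False
    show ?thesis
    proof (cases "b = 0")
      case True
      have "((1 - u) * a) powr p = (1 - u) powr p * a powr p" by (rule powr_mult)
      also have "\<dots> \<le> (1 - u) * a powr p" using up[of "1 - u"] assms by (intro mult_right_mono) auto
      finally show ?thesis using True assms(1) by simp
    next
      case False
      have "convex_on {0<..} (\<lambda>x. x powr p)" by (rule powr_convex) (use assms in auto)
      from convex_onD[OF this, of u a b] show ?thesis using a False assms by auto
    qed
  qed
qed

lemma cvx_term: "p \<ge> 1 \<Longrightarrow> convex_on UNIV (\<lambda>t. A + \<bar>c + t\<bar> powr p)"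
proof (rule convex_onI)
  fix u x y :: real assume p: "p \<ge> 1" and u: "0 < u" "u < 1"
  have "\<bar>c + ((1 - u) *\<^sub>R x + u *\<^sub>R y)\<bar> \<le> (1 - u) * \<bar>c + x\<bar> + u * \<bar>c + y\<bar>"
  proof -
    have "c + ((1 - u) *\<^sub>R x + u *\<^sub>R y) = (1 - u) * (c + x) + u * (c + y)" by (simp add: algebra_simps)
    also have "\<bar>\<dots>\<bar> \<le> \<bar>(1 - u) * (c + x)\<bar> + \<bar>u * (c + y)\<bar>" by (rule abs_triangle_ineq)
    also have "\<dots> = (1 - u) * \<bar>c + x\<bar> + u * \<bar>c + y\<bar>" using u by (simp add: abs_mult)
    finally show ?thesis .
  qed
  then have "\<bar>c + ((1 - u) *\<^sub>R x + u *\<^sub>R y)\<bar> powr p \<le> ((1 - u) * \<bar>c + x\<bar> + u * \<bar>c + y\<bar>) powr p"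
    using p by (intro powr_mono2) auto
  also have "\<dots> \<le> (1 - u) * \<bar>c + x\<bar> powr p + u * \<bar>c + y\<bar> powr p"
    using p u by (intro powr_conv) auto
  finally show "A + \<bar>c + ((1 - u) *\<^sub>R x + u *\<^sub>R y)\<bar> powr p \<le> (1 - u) * (A + \<bar>c + x\<bar> powr p) + u * (A + \<bar>c + y\<bar> powr p)"
    by (simp add: algebra_simps)
qed simp

lemma cvx_mono:
  fixes f :: "real \<Rightarrow> real"
  assumes "convex_on UNIV f" "\<And>t. f 0 \<le> f t"
  shows "mono_on {0..} f \<and> antimono_on {..0} f"
proof
  show "mono_on {0..} f"
  proof (rule mono_onI)
    fix a b :: real assume ab: "a \<in> {0..}" "b \<in> {0..}" "a \<le> b"
    show "f a \<le> f b"
    proof (cases "b = 0")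
      case True then show ?thesis using ab by simp
    next
      case False
      then have b: "b > 0" using ab by simp
      let ?u = "a / b"
      have u: "0 \<le> ?u" "?u \<le> 1" using ab b by auto
      have "f ((1 - ?u) *\<^sub>R 0 + ?u *\<^sub>R b) \<le> (1 - ?u) * f 0 + ?u * f b"
        using convex_onD[OF assms(1) u, of 0 b] by simp
      moreover have "(1 - ?u) *\<^sub>R 0 + ?u *\<^sub>R b = a" using b by simp
      moreover have "(1 - ?u) * f 0 \<le> (1 - ?u) * f b" using u assms(2) by (intro mult_left_mono) auto
      ultimately show ?thesis by (simp add: algebra_simps)
    qed
  qed
next
  show "antimono_on {..0} f"
  proof (rule monotone_onI)
    fix a b :: real assume ab: "a \<in> {..0}" "b \<in> {..0}" "a \<le> b"
    show "f b \<le> f a"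
    proof (cases "a = 0")
      case True then show ?thesis using ab by simp
    next
      case False
      then have a: "a < 0" using ab by simp
      let ?u = "b / a"
      have u: "0 \<le> ?u" "?u \<le> 1" using ab a by (auto simp: divide_le_eq_1 zero_le_divide_iff)
      have "f ((1 - ?u) *\<^sub>R 0 + ?u *\<^sub>R a) \<le> (1 - ?u) * f 0 + ?u * f a"
        using convex_onD[OF assms(1) u, of 0 a] by simp
      moreover have "(1 - ?u) *\<^sub>R 0 + ?u *\<^sub>R a = b" using a by simp
      moreover have "(1 - ?u) * f 0 \<le> (1 - ?u) * f a" using u assms(2) by (intro mult_left_mono) auto
      ultimately show ?thesis by (simp add: algebra_simps)
    qed
  qed
qed


lemma parts_ne_list: "bs \<in> parts xs \<Longrightarrow> xs \<noteq> [] \<Longrightarrow> bs \<noteq> [] \<and> last bs \<noteq> [] \<and> bs = butlast bs @ [last bs]"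
proof -
  assume a: "bs \<in> parts xs" "xs \<noteq> []"
  then have n: "bs \<noteq> []" by (auto simp: parts_def)
  then have "last bs \<in> set bs" by simp
  then have "last bs \<noteq> []" using a(1) by (auto simp: parts_def)
  then show ?thesis using n by simp
qed

lemma snoc_lower:
  assumes "bs \<in> parts xs" "xs \<noteq> []"
  shows "bval p (butlast bs) + \<bar>sum_list (last bs) + t\<bar> powr p \<le> M p (xs @ [t])"
    and "bval p bs + \<bar>t\<bar> powr p \<le> M p (xs @ [t])"
proof -
  have e: "bs \<noteq> []" "last bs \<noteq> []" "bs = butlast bs @ [last bs]" using parts_ne_list[OF assms] by auto
  have c: "concat bs = xs" "[] \<notin> set bs" using assms(1) by (auto simp: parts_def)
  have "concat (butlast bs @ [last bs @ [t]]) = concat (butlast bs @ [last bs]) @ [t]" by simp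
  also have "\<dots> = xs @ [t]" using e(3) c(1) by simp
  finally have "butlast bs @ [last bs @ [t]] \<in> parts (xs @ [t])"
    using c(2) by (auto simp: parts_def dest: in_set_butlastD)
  from M_ge[OF this, of p] show "bval p (butlast bs) + \<bar>sum_list (last bs) + t\<bar> powr p \<le> M p (xs @ [t])"
    by simp
  have "bs @ [[t]] \<in> parts (xs @ [t])" using assms(1) by (auto simp: parts_def)
  from M_ge[OF this, of p] show "bval p bs + \<bar>t\<bar> powr p \<le> M p (xs @ [t])" by simp
qed

lemma snoc_upper:
  assumes "xs \<noteq> []"
  shows "\<exists>bs\<in>parts xs. M p (xs @ [t]) \<le> bval p (butlast bs) + \<bar>sum_list (last bs) + t\<bar> powr p
          \<or> M p (xs @ [t]) \<le> bval p bs + \<bar>t\<bar> powr p"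
proof -
  obtain cs where cs: "cs \<in> parts (xs @ [t])" "M p (xs @ [t]) = bval p cs" using M_obtain by blast
  have e: "cs \<noteq> []" "last cs \<noteq> []" "cs = butlast cs @ [last cs]" using parts_ne_list[OF cs(1)] by auto
  have cc: "concat cs = xs @ [t]" using cs(1) by (simp add: parts_def)
  define B where "B = butlast cs"
  define b where "b = butlast (last cs)"
  have ecs: "concat cs = concat B @ last cs" unfolding B_def by (subst e(3)) simp
  have lc: "last cs = b @ [t]"
  proof -
    have "last (concat cs) = t" using cc by simp
    then have "last (last cs) = t" using e(2) ecs by simp
    then show ?thesis unfolding b_def using e(2) append_butlast_last_id[of "last cs"] by simp
  qed
  have cB: "concat B @ b = xs" using cc ecs lc by simp
  have Bne: "[] \<notin> set B" using cs(1) unfolding B_def parts_def by (auto dest: in_set_butlastD)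
  have "cs = B @ [b @ [t]]" using e(3) lc unfolding B_def by simp
  then have val: "M p (xs @ [t]) = bval p B + \<bar>sum_list b + t\<bar> powr p"
    using cs(2) by simp
  show ?thesis
  proof (cases "b = []")
    case True
    then have "B \<in> parts xs" using cB Bne by (simp add: parts_def)
    then show ?thesis using val True by force
  next
    case False
    then have "B @ [b] \<in> parts xs" using cB Bne by (simp add: parts_def)
    then show ?thesis using val by force
  qed
qed


lemma snoc_convex:
  assumes "xs \<noteq> []" "p \<ge> 1"
  shows "convex_on UNIV (\<lambda>t. M p (xs @ [t]))"
proof (rule convex_onI)
  fix u x y :: real assume u: "0 < u" "u < 1"
  let ?z = "(1 - u) *\<^sub>R x + u *\<^sub>R y"
  obtain bs where bs: "bs \<in> parts xs" and
    or: "M p (xs @ [?z]) \<le> bval p (butlast bs) + \<bar>sum_list (last bs) + ?z\<bar> powr p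
          \<or> M p (xs @ [?z]) \<le> bval p bs + \<bar>?z\<bar> powr p"
    using snoc_upper[OF assms(1)] by blast
  show "M p (xs @ [?z]) \<le> (1 - u) * M p (xs @ [x]) + u * M p (xs @ [y])"
    using or
  proof
    assume h: "M p (xs @ [?z]) \<le> bval p (butlast bs) + \<bar>sum_list (last bs) + ?z\<bar> powr p"
    let ?g = "\<lambda>t. bval p (butlast bs) + \<bar>sum_list (last bs) + t\<bar> powr p"
    have "?g ?z \<le> (1 - u) * ?g x + u * ?g y"
      using convex_onD[OF cvx_term[OF assms(2), of "bval p (butlast bs)" "sum_list (last bs)"], of u x y] u by simp
    also have "\<dots> \<le> (1 - u) * M p (xs @ [x]) + u * M p (xs @ [y])"
      using snoc_lower(1)[OF bs assms(1)] u by (intro add_mono mult_left_mono) auto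
    finally show ?thesis using h by simp
  next
    assume h: "M p (xs @ [?z]) \<le> bval p bs + \<bar>?z\<bar> powr p"
    let ?g = "\<lambda>t. bval p bs + \<bar>0 + t\<bar> powr p"
    have "?g ?z \<le> (1 - u) * ?g x + u * ?g y"
      using convex_onD[OF cvx_term[OF assms(2), of "bval p bs" 0], of u x y] u by simp
    also have "\<dots> \<le> (1 - u) * M p (xs @ [x]) + u * M p (xs @ [y])"
      using snoc_lower(2)[OF bs assms(1)] u by (intro add_mono mult_left_mono) auto
    finally show ?thesis using h by simp
  qed
qed simp

lemma snoc_zero:
  assumes "xs \<noteq> []" "p \<ge> 1"
  shows "M p (xs @ [0]) \<le> M p xs"
proof -
  obtain bs where bs: "bs \<in> parts xs" and
    or: "M p (xs @ [0]) \<le> bval p (butlast bs) + \<bar>sum_list (last bs) + 0\<bar> powr p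
          \<or> M p (xs @ [0]) \<le> bval p bs + \<bar>0\<bar> powr p"
    using snoc_upper[OF assms(1)] by blast
  have e: "bs = butlast bs @ [last bs]" using parts_ne_list[OF bs assms(1)] by auto
  have "bval p bs = bval p (butlast bs) + \<bar>sum_list (last bs)\<bar> powr p" by (subst e) simp
  then show ?thesis using or M_ge[OF bs, of p] assms(2) by auto
qed

lemma snoc_jump:
  assumes "xs \<noteq> []" "p \<ge> 1"
  shows "M p xs + \<bar>y\<bar> powr p \<le> M p (xs @ [y])"
proof -
  obtain bs where bs: "bs \<in> parts xs" "M p xs = bval p bs" using M_obtain by blast
  show ?thesis using snoc_lower(2)[OF bs(1) assms(1)] bs(2) by simp
qed

lemma tangent:
  fixes a b p :: real
  assumes "a > 0" "b \<ge> 0" "p \<ge> 1"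
  shows "(a + b) powr p - a powr p \<ge> p * a powr (p - 1) * b"
proof -
  have "p * a powr (p - 1) * ((a + b) - a) \<le> (a + b) powr p - a powr p"
  proof (rule convex_on_imp_above_tangent[where A = "{0<..}"])
    show "convex_on {0<..} (\<lambda>x. x powr p)" by (rule powr_convex) (use assms in auto)
    show "((\<lambda>x. x powr p) has_field_derivative p * a powr (p - 1)) (at a within {0<..})"
      using has_real_derivative_powr[OF assms(1), of p] by (rule has_field_derivative_at_within)
  qed (use assms in \<open>auto simp: interior_open\<close>)
  then show ?thesis by simp
qed

lemma snoc_jump2:
  assumes "xs \<noteq> []" "p \<ge> 1" "last xs * y > 0"
  shows "M p xs + p * \<bar>last xs\<bar> powr (p - 1) * \<bar>y\<bar> \<le> M p (xs @ [y])"
proof -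
  obtain bs where bs: "bs \<in> parts xs" "M p xs = bval p bs" using M_obtain by blast
  have e: "bs \<noteq> []" "last bs \<noteq> []" "bs = butlast bs @ [last bs]" using parts_ne_list[OF bs(1) assms(1)] by auto
  define B where "B = butlast bs"
  define b where "b = last bs"
  define x where "x = last xs"
  define c where "c = sum_list b"
  have cbs: "concat bs = xs" "[] \<notin> set bs" using bs(1) by (auto simp: parts_def)
  have ecs: "concat bs = concat B @ b" unfolding B_def b_def by (subst e(3)) simp
  have lb: "last b = x" using cbs(1) ecs e(2) unfolding x_def b_def by auto
  have Mv: "M p xs = bval p B + \<bar>c\<bar> powr p" using bs(2) e(3) unfolding B_def b_def c_def
    by (metis bval_append bval_Cons bval_Nil add_0_right)
  have x0: "x \<noteq> 0" using assms(3) unfolding x_def by auto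
  have key: "\<bar>x\<bar> \<le> \<bar>c\<bar> \<and> c * x > 0"
  proof (cases "butlast b = []")
    case True
    then have "b = [x]" using lb e(2) unfolding b_def by (metis append_butlast_last_id append_Nil)
    then show ?thesis unfolding c_def using x0 by (simp add: zero_less_mult_iff) linarith
  next
    case False
    define b1 where "b1 = butlast b"
    have bb: "b = b1 @ [x]" using lb e(2) unfolding b1_def b_def by (metis append_butlast_last_id)
    have "B @ [b1, [x]] \<in> parts xs"
    proof -
      have "concat (B @ [b1, [x]]) = concat B @ b" using bb by simp
      moreover have "[] \<notin> set B" using cbs(2) unfolding B_def by (auto dest: in_set_butlastD)
      ultimately show ?thesis using cbs(1) ecs False unfolding parts_def b1_def by auto
    qed
    from M_ge[OF this, of p] have ineq: "\<bar>c - x\<bar> powr p + \<bar>x\<bar> powr p \<le> \<bar>c\<bar> powr p"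
      using Mv bb unfolding c_def by simp
    have xp: "\<bar>x\<bar> powr p > 0" using x0 by simp
    have "\<bar>c - x\<bar> < \<bar>c\<bar>"
    proof (rule ccontr)
      assume "\<not> \<bar>c - x\<bar> < \<bar>c\<bar>"
      then have "\<bar>c\<bar> powr p \<le> \<bar>c - x\<bar> powr p" using assms(2) by (intro powr_mono2) auto
      then show False using ineq xp by linarith
    qed
    moreover have "\<bar>x\<bar> \<le> \<bar>c\<bar>"
    proof (rule ccontr)
      assume "\<not> \<bar>x\<bar> \<le> \<bar>c\<bar>"
      then have "\<bar>c\<bar> powr p < \<bar>x\<bar> powr p" using assms(2) by (intro powr_less_mono2) auto
      moreover have "0 \<le> \<bar>c - x\<bar> powr p" by simp
      ultimately show False using ineq by linarith
    qed
    ultimately show ?thesis using x0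
      by (cases "c \<ge> 0"; cases "x \<ge> 0") (auto simp: zero_less_mult_iff abs_if split: if_splits)
  qed
  have cy: "c * y > 0" using key assms(3) unfolding x_def
    by (auto simp: zero_less_mult_iff)
  have c0: "\<bar>c\<bar> > 0" using key by auto
  have "\<bar>c + y\<bar> = \<bar>c\<bar> + \<bar>y\<bar>" using cy by (auto simp: zero_less_mult_iff)
  then have "\<bar>c + y\<bar> powr p - \<bar>c\<bar> powr p \<ge> p * \<bar>c\<bar> powr (p - 1) * \<bar>y\<bar>"
    using tangent[OF c0 _ assms(2), of "\<bar>y\<bar>"] by simp
  moreover have "p * \<bar>x\<bar> powr (p - 1) * \<bar>y\<bar> \<le> p * \<bar>c\<bar> powr (p - 1) * \<bar>y\<bar>"
    using key assms(2) by (intro mult_right_mono mult_left_mono powr_mono2) auto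
  moreover have "bval p B + \<bar>c + y\<bar> powr p \<le> M p (xs @ [y])"
    using snoc_lower(1)[OF bs(1) assms(1), of p y] unfolding B_def b_def c_def by simp
  ultimately show ?thesis using Mv unfolding x_def by linarith
qed

theorem proposition2p2:
  fixes p :: real and xs :: "real list"
  assumes "p \<ge> 1" and "xs \<noteq> []"
  shows
    "convex_on UNIV (\<lambda>t. sp p (xs @ [t]) powr p) \<and>
     antimono_on {..0} (\<lambda>t. sp p (xs @ [t]) powr p) \<and>
     mono_on {0..} (\<lambda>t. sp p (xs @ [t]) powr p) \<and>
     (\<forall>y. sp p (xs @ [y]) powr p - sp p xs powr p \<ge> \<bar>y\<bar> powr p) \<and>
     (\<forall>y. last xs * y > 0 \<longrightarrow>
        sp p (xs @ [y]) powr p - sp p xs powr p \<ge> p * \<bar>last xs\<bar> powr (p - 1) * \<bar>y\<bar>) \<and>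
     convex_on UNIV (\<lambda>t. sp p (t # xs) powr p) \<and>
     antimono_on {..0} (\<lambda>t. sp p (t # xs) powr p) \<and>
     mono_on {0..} (\<lambda>t. sp p (t # xs) powr p) \<and>
     (\<forall>y. sp p (y # xs) powr p - sp p xs powr p \<ge> \<bar>y\<bar> powr p) \<and>
     (\<forall>y. hd xs * y > 0 \<longrightarrow>
        sp p (y # xs) powr p - sp p xs powr p \<ge> p * \<bar>hd xs\<bar> powr (p - 1) * \<bar>y\<bar>)"
proof -
  have p0: "p > 0" using assms(1) by simp
  have A: "convex_on UNIV (\<lambda>t. M p (ys @ [t])) \<and> antimono_on {..0} (\<lambda>t. M p (ys @ [t])) \<and>
     mono_on {0..} (\<lambda>t. M p (ys @ [t])) \<and> (\<forall>y. M p (ys @ [y]) - M p ys \<ge> \<bar>y\<bar> powr p) \<and>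
     (\<forall>y. last ys * y > 0 \<longrightarrow> M p (ys @ [y]) - M p ys \<ge> p * \<bar>last ys\<bar> powr (p - 1) * \<bar>y\<bar>)"
    if ys: "ys \<noteq> []" for ys
  proof -
    have cv: "convex_on UNIV (\<lambda>t. M p (ys @ [t]))" by (rule snoc_convex[OF ys assms(1)])
    have "M p (ys @ [0]) \<le> M p (ys @ [t])" for t
      using snoc_zero[OF ys assms(1)] snoc_jump[OF ys assms(1), of t] powr_ge_zero[of "\<bar>t\<bar>" p] by linarith
    then have "mono_on {0..} (\<lambda>t. M p (ys @ [t])) \<and> antimono_on {..0} (\<lambda>t. M p (ys @ [t]))"
      by (intro cvx_mono[OF cv]) simp
    moreover have "\<forall>y. M p (ys @ [y]) - M p ys \<ge> \<bar>y\<bar> powr p"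
      using snoc_jump[OF ys assms(1)] by (simp add: algebra_simps)
    moreover have "\<forall>y. last ys * y > 0 \<longrightarrow> M p (ys @ [y]) - M p ys \<ge> p * \<bar>last ys\<bar> powr (p - 1) * \<bar>y\<bar>"
      using snoc_jump2[OF ys assms(1)] by (simp add: algebra_simps)
    ultimately show ?thesis using cv by blast
  qed
  have pre: "\<And>t. M p (t # xs) = M p (rev xs @ [t])" using M_rev by (metis rev.simps(2))
  have mx: "M p xs = M p (rev xs)" using M_rev by metis
  have hd: "hd xs = last (rev xs)" using assms(2) by (simp add: last_rev)
  have rne: "rev xs \<noteq> []" using assms(2) by simp
  show ?thesis
    unfolding sp_eq[OF p0] pre
    using A[OF assms(2)] A[OF rne] unfolding mx[symmetric] hd[symmetric] by blast
qed

end
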